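(* There are absolute constants $c_1,c_2>0$ such that for infinitely many $n$ there exist integers $b_1,\dots,b_n\ge 0$ with $b_1+\dots+b_n=n-1$ such that $(b_1,\dots,b_n)$-BG has an equilibrium graph in the SUM version whose diameter $d$ satisfies $c_1\log n\le d\le c_2\log n$.
   Context: Bounded budget network creation game $(b_1,\dots,b_n)$-BG: $n$ players with integer budgets $0\le b_i\le n-1$. A strategy of player $i$ is a set $S_i\subseteq\{1,\dots,n\}\setminus\{i\}$ with $|S_i|=b_i$; a profile is realized by the directed graph $G$ on $u_1,\dots,u_n$ with an arc $\overrightarrow{u_iu_j}$ iff $j\in S_i$. $U(G)$ is the undirected multigraph obtained by ignoring directions; $\operatorname{dist}(u,v)$ is the distance in $U(G)$, defined as $n^2$ between different components. SUM cost: $c_{SUM}(u)=\sum_v\operatorname{dist}(u,v)$. An equilibrium graph in the SUM version is a realization in which no vertex can decrease its SUM cost by changing its own strategy while the other strategies are fixed. The diameter is the maximum distance between two vertices. Logarithms are base 2. *)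

theory Defs
  imports Complex_Main
begin

text \<open>Players/vertices are 0,...,n-1. A profile is S :: nat => nat set, S i being
the strategy of player i. Budgets b :: nat => nat (only values below n matter).\<close>

definition is_strategy :: "nat \<Rightarrow> (nat \<Rightarrow> nat) \<Rightarrow> nat \<Rightarrow> nat set \<Rightarrow> bool" where
  "is_strategy n b i T \<longleftrightarrow> T \<subseteq> {..<n} - {i} \<and> card T = b i"

definition is_profile :: "nat \<Rightarrow> (nat \<Rightarrow> nat) \<Rightarrow> (nat \<Rightarrow> nat set) \<Rightarrow> bool" where
  "is_profile n b S \<longleftrightarrow> (\<forall>i<n. is_strategy n b i (S i))"

definition adj :: "(nat \<Rightarrow> nat set) \<Rightarrow> nat \<Rightarrow> nat \<Rightarrow> bool" where
  "adj S u v \<longleftrightarrow> v \<in> S u \<or> u \<in> S v"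

definition walk :: "nat \<Rightarrow> (nat \<Rightarrow> nat set) \<Rightarrow> nat \<Rightarrow> nat \<Rightarrow> nat \<Rightarrow> bool" where
  "walk n S k u v \<longleftrightarrow> (\<exists>p::nat \<Rightarrow> nat. p 0 = u \<and> p k = v \<and> (\<forall>i\<le>k. p i < n)
      \<and> (\<forall>i<k. adj S (p i) (p (Suc i))))"

definition gdist :: "nat \<Rightarrow> (nat \<Rightarrow> nat set) \<Rightarrow> nat \<Rightarrow> nat \<Rightarrow> nat" where
  "gdist n S u v = (if \<exists>k. walk n S k u v then (LEAST k. walk n S k u v) else n ^ 2)"

definition sum_cost :: "nat \<Rightarrow> (nat \<Rightarrow> nat set) \<Rightarrow> nat \<Rightarrow> nat" where
  "sum_cost n S u = (\<Sum>v<n. gdist n S u v)"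

definition sum_equilibrium :: "nat \<Rightarrow> (nat \<Rightarrow> nat) \<Rightarrow> (nat \<Rightarrow> nat set) \<Rightarrow> bool" where
  "sum_equilibrium n b S \<longleftrightarrow> is_profile n b S \<and>
     (\<forall>i<n. \<forall>T. is_strategy n b i T \<longrightarrow> sum_cost n S i \<le> sum_cost n (S(i := T)) i)"

definition diameter :: "nat \<Rightarrow> (nat \<Rightarrow> nat set) \<Rightarrow> nat" where
  "diameter n S = Max {gdist n S u v | u v. u < n \<and> v < n}"

end

theory Submission
  imports Defs "HOL-Library.Infinite_Set"
begin

definition par :: "nat \<Rightarrow> nat" where "par c = (c - 1) div 2"

function dep :: "nat \<Rightarrow> nat" where
  "dep v = (if v = 0 then 0 else Suc (dep ((v - 1) div 2)))"
  by auto
termination by (relation "measure id") auto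

declare dep.simps[simp del]

lemma dep0[simp]: "dep 0 = 0" by (simp add: dep.simps)
lemma dep_pos: "0 < v \<Longrightarrow> dep v = Suc (dep (par v))"
  by (simp add: dep.simps par_def)

definition St :: "nat \<Rightarrow> nat \<Rightarrow> nat set" where
  "St n v = {c. 0 < c \<and> c < n \<and> par c = v}"

definition desc :: "nat \<Rightarrow> nat \<Rightarrow> bool" where
  "desc c v \<longleftrightarrow> (\<exists>j. (v + 1) div 2 ^ j = c + 1)"

lemma par_less: "0 < v \<Longrightarrow> par v < v" by (simp add: par_def)
lemma par_Suc: "0 < v \<Longrightarrow> par v + 1 = (v + 1) div 2" by (simp add: par_def)
lemma par_c1[simp]: "par (2*a+1) = a" by (simp add: par_def)
lemma par_c2[simp]: "par (2*a+2) = a" by (simp add: par_def)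

lemma adj_St: "adj (St n) u w \<longleftrightarrow> (0 < w \<and> w < n \<and> par w = u) \<or> (0 < u \<and> u < n \<and> par u = w)"
  by (auto simp: adj_def St_def)

lemma adj_dep: "adj (St n) u w \<Longrightarrow> dep w = Suc (dep u) \<or> dep u = Suc (dep w)"
  unfolding adj_St by (auto simp: dep_pos)

lemma divcomm: "(x::nat) div a div b = x div b div a"
  by (metis div_mult2_eq mult.commute)

lemma one_div2[simp]: "Suc 0 div (2 * 2 ^ j) = 0"
proof -
  have "(1::nat) < 2 * 2^j" using one_le_power[of "2::nat" j] by linarith
  then show ?thesis by simp
qed

lemma desc_refl: "desc c c" unfolding desc_def by (rule exI[of _ 0]) simp

lemma desc_dep: "(v + 1) div 2 ^ j = c + 1 \<Longrightarrow> dep v = dep c + j"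
proof (induction j arbitrary: v)
  case 0 then show ?case by simp
next
  case (Suc j)
  have "v > 0"
  proof (rule ccontr)
    assume "\<not> v > 0" then have "v = 0" by simp
    with Suc.prems show False by simp
  qed
  have "(v + 1) div 2 ^ Suc j = ((v+1) div 2) div 2 ^ j"
    by (simp add: div_mult2_eq mult.commute)
  with Suc.prems par_Suc[OF \<open>v>0\<close>] have "(par v + 1) div 2 ^ j = c + 1" by simp
  from Suc.IH[OF this] dep_pos[OF \<open>v>0\<close>] show ?case by simp
qed

lemma desc_ge: "desc c v \<Longrightarrow> c \<le> v"
  unfolding desc_def using div_le_dividend by (metis add_le_cancel_right)

lemma desc_par: "desc c v \<Longrightarrow> v \<noteq> c \<Longrightarrow> 0 < v \<and> desc c (par v)"
proof -
  assume d: "desc c v" and ne: "v \<noteq> c"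
  then obtain j where j: "(v + 1) div 2 ^ j = c + 1" unfolding desc_def by blast
  with ne obtain j' where jj: "j = Suc j'" by (cases j) auto
  have v0: "v > 0"
  proof (rule ccontr)
    assume "\<not> v > 0" then have "v = 0" by simp
    with j jj show False by simp
  qed
  have "(v + 1) div 2 ^ j = ((v+1) div 2) div 2 ^ j'"
    by (simp add: jj div_mult2_eq mult.commute)
  with j par_Suc[OF v0] have "(par v + 1) div 2 ^ j' = c + 1" by simp
  with v0 show ?thesis unfolding desc_def by blast
qed

lemma par_desc: "0 < v \<Longrightarrow> desc c (par v) \<Longrightarrow> desc c v"
proof -
  assume v0: "0 < v" and d: "desc c (par v)"
  then obtain j where j: "(par v + 1) div 2 ^ j = c + 1" unfolding desc_def by blast
  have "(v + 1) div 2 ^ Suc j = ((v+1) div 2) div 2 ^ j"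
    by (simp add: div_mult2_eq mult.commute)
  with j par_Suc[OF v0] have "(v + 1) div 2 ^ Suc j = c + 1" by simp
  then show ?thesis unfolding desc_def by blast
qed

lemma desc_up: "desc c v \<Longrightarrow> 0 < c \<Longrightarrow> desc (par c) v"
proof -
  assume d: "desc c v" and c0: "0 < c"
  then obtain j where j: "(v + 1) div 2 ^ j = c + 1" unfolding desc_def by blast
  have "(v + 1) div 2 ^ Suc j = ((v+1) div 2^j) div 2"
    using divcomm by (simp add: div_mult2_eq)
  with j par_Suc[OF c0] have "(v + 1) div 2 ^ Suc j = par c + 1" by simp
  then show ?thesis unfolding desc_def by blast
qed

lemma desc_dep_le: "desc c v \<Longrightarrow> dep c \<le> dep v"
  unfolding desc_def using desc_dep by fastforce

lemma dep_c12: "dep (2*a+1) = Suc (dep a)" "dep (2*a+2) = Suc (dep a)"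
  using dep_pos[of "2*a+1"] dep_pos[of "2*a+2"] by (auto simp: par_def)

lemma desc_disj: "desc (2*a+1) v \<Longrightarrow> desc (2*a+2) v \<Longrightarrow> False"
proof -
  assume "desc (2*a+1) v" "desc (2*a+2) v"
  then obtain j k where j: "(v + 1) div 2 ^ j = 2*a+1 + 1" and k: "(v + 1) div 2 ^ k = 2*a+2 + 1"
    unfolding desc_def by blast
  from desc_dep[OF j] desc_dep[OF k] dep_c12 have "j = k" by simp
  with j k show False by simp
qed

lemma desc_split: "desc a t \<Longrightarrow> t \<noteq> a \<Longrightarrow> desc (2*a+1) t \<or> desc (2*a+2) t"
proof -
  assume d: "desc a t" and ne: "t \<noteq> a"
  then obtain j where j: "(t + 1) div 2 ^ j = a + 1" unfolding desc_def by blast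
  with ne obtain j' where jj: "j = Suc j'" by (cases j) auto
  define q where "q = (t+1) div 2 ^ j'"
  have "(t + 1) div 2 ^ j = q div 2"
    using divcomm by (simp add: jj q_def div_mult2_eq)
  with j have "q div 2 = a + 1" by simp
  then have "q = 2*a+1+1 \<or> q = 2*a+2+1" by linarith
  then show ?thesis unfolding desc_def q_def by blast
qed

inductive iw :: "nat \<Rightarrow> (nat \<Rightarrow> nat set) \<Rightarrow> nat set \<Rightarrow> nat \<Rightarrow> nat \<Rightarrow> nat \<Rightarrow> bool"
  for n S X where
  iw0: "u < n \<Longrightarrow> u \<notin> X \<Longrightarrow> iw n S X 0 u u"
| iwS: "u < n \<Longrightarrow> u \<notin> X \<Longrightarrow> adj S u w \<Longrightarrow> iw n S X k w v \<Longrightarrow> iw n S X (Suc k) u v"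

lemma iw_start: "iw n S X k u v \<Longrightarrow> u < n \<and> u \<notin> X"
  by (induction rule: iw.induct) auto

lemma iw_end: "iw n S X k u v \<Longrightarrow> v < n \<and> v \<notin> X"
  by (induction rule: iw.induct) auto

lemma walk_iw: "walk n S k u v \<Longrightarrow> iw n S {} k u v"
proof (induction k arbitrary: u)
  case 0 then show ?case by (auto simp: walk_def intro: iw.iw0)
next
  case (Suc k)
  then obtain p where p: "p 0 = u" "p (Suc k) = v" "\<forall>i\<le>Suc k. p i < n"
      "\<forall>i<Suc k. adj S (p i) (p (Suc i))" unfolding walk_def by blast
  have "walk n S k (p 1) v" unfolding walk_def
    by (rule exI[of _ "\<lambda>i. p (Suc i)"]) (use p in auto)
  from Suc.IH[OF this] p show ?case
    by (auto intro!: iw.iwS[where w="p 1"])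
qed

lemma iw_walk: "iw n S X k u v \<Longrightarrow> walk n S k u v"
proof (induction rule: iw.induct)
  case (iw0 u) then show ?case unfolding walk_def by (rule_tac exI[of _ "\<lambda>i. u"]) auto
next
  case (iwS u w k v)
  then obtain p where p: "p 0 = w" "p k = v" "\<forall>i\<le>k. p i < n"
      "\<forall>i<k. adj S (p i) (p (Suc i))" unfolding walk_def by blast
  show ?case unfolding walk_def
  proof (rule exI[of _ "\<lambda>i. if i = 0 then u else p (i - 1)"], intro conjI allI impI)
    fix i assume "i \<le> Suc k" then show "(if i = 0 then u else p (i - 1)) < n"
      using p iwS by auto
  next
    fix i assume i: "i < Suc k"
    show "adj S (if i = 0 then u else p (i - 1)) (if Suc i = 0 then u else p (Suc i - 1))"
    proof (cases i)
      case 0 then show ?thesis using p iwS by auto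
    next
      case (Suc i') then show ?thesis using p i by auto
    qed
  qed (use p in auto)
qed

lemma iw_mono: "iw n S X k u v \<Longrightarrow> Y \<subseteq> X \<Longrightarrow> iw n S Y k u v"
  by (induction rule: iw.induct) (auto intro: iw.intros)

lemma adj_sym: "adj S u w \<Longrightarrow> adj S w u" by (auto simp: adj_def)

lemma iw_snoc: "iw n S {} k u w \<Longrightarrow> adj S w v \<Longrightarrow> v < n \<Longrightarrow> iw n S {} (Suc k) u v"
  by (induction rule: iw.induct) (auto intro: iw.intros)

lemma iw_rev: "iw n S {} k u v \<Longrightarrow> iw n S {} k v u"
proof (induction rule: iw.induct)
  case (iw0 u) then show ?case by (auto intro: iw.iw0)
next
  case (iwS u w k v) then show ?case by (auto intro: iw_snoc adj_sym)
qed

lemma iw_trans: "iw n S {} k1 u w \<Longrightarrow> iw n S {} k2 w v \<Longrightarrow> iw n S {} (k1 + k2) u v"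
  by (induction rule: iw.induct) (auto intro: iw.intros)

lemma gdist_le: "iw n S {} k u v \<Longrightarrow> gdist n S u v \<le> k"
proof -
  assume h: "iw n S {} k u v"
  then have "walk n S k u v" by (rule iw_walk)
  then show ?thesis unfolding gdist_def by (auto intro: Least_le)
qed

lemma gdist_ge: "(\<And>k. iw n S {} k u v \<Longrightarrow> m \<le> k) \<Longrightarrow> m \<le> n^2 \<Longrightarrow> m \<le> gdist n S u v"
proof -
  assume h: "\<And>k. iw n S {} k u v \<Longrightarrow> m \<le> k" and m: "m \<le> n^2"
  show ?thesis
  proof (cases "\<exists>k. walk n S k u v")
    case True
    then have "walk n S (LEAST k. walk n S k u v) u v" by (rule LeastI_ex)
    then have "m \<le> (LEAST k. walk n S k u v)" using h walk_iw by blast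
    with True show ?thesis unfolding gdist_def by simp
  next
    case False then show ?thesis using m unfolding gdist_def by simp
  qed
qed

lemma gdist_walk: "iw n S {} k u v \<Longrightarrow> iw n S {} (gdist n S u v) u v"
proof -
  assume "iw n S {} k u v"
  then have e: "\<exists>k. walk n S k u v" using iw_walk by blast
  then have "walk n S (LEAST k. walk n S k u v) u v" by (rule LeastI_ex)
  with e show ?thesis unfolding gdist_def using walk_iw by simp
qed

lemma gdist_self: "u < n \<Longrightarrow> gdist n S u u = 0"
proof -
  assume "u < n"
  then have "iw n S {} 0 u u" by (auto intro: iw.iw0)
  then show ?thesis using gdist_le by fastforce
qed

lemma iw_dep: "iw n (St m) X k u v \<Longrightarrow> dep v \<le> dep u + k \<and> dep u \<le> dep v + k"
proof (induction rule: iw.induct)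
  case (iw0 u) then show ?case by simp
next
  case (iwS u w k v) then show ?case using adj_dep[of m u w] by auto
qed

lemma iw_last: "iw n S' {} k u v \<Longrightarrow> v \<noteq> i \<Longrightarrow>
   (u \<noteq> i \<and> iw n S' {i} k u v) \<or> (\<exists>x k'. k' < k \<and> adj S' i x \<and> iw n S' {i} k' x v)"
proof (induction rule: iw.induct)
  case (iw0 u) then show ?case by (auto intro: iw.iw0)
next
  case (iwS u w k v)
  from iwS.IH[OF iwS.prems] show ?case
  proof
    assume a: "w \<noteq> i \<and> iw n S' {i} k w v"
    show ?thesis
    proof (cases "u = i")
      case True then show ?thesis using a iwS.hyps by blast
    next
      case False then show ?thesis using a iwS.hyps by (auto intro: iw.iwS)
    qed
  next
    assume "\<exists>x k'. k' < k \<and> adj S' i x \<and> iw n S' {i} k' x v"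
    then show ?thesis by (meson less_Suc_eq)
  qed
qed

lemma iw_change: "iw n S' {i} k u v \<Longrightarrow> (\<And>j. j \<noteq> i \<Longrightarrow> S' j = S j) \<Longrightarrow> iw n S {i} k u v"
proof (induction rule: iw.induct)
  case (iw0 u) then show ?case by (auto intro: iw.iw0)
next
  case (iwS u w k v)
  have "w \<noteq> i" using iw_start[OF iwS.hyps(4)] by simp
  with iwS.hyps(2) iwS.hyps(3) iwS.prems have "adj S u w" by (auto simp: adj_def)
  with iwS show ?case by (auto intro: iw.intros)
qed

lemma iw_cross: "iw n (St m) {par c} k x v \<Longrightarrow> 0 < c \<Longrightarrow> (desc c x \<longleftrightarrow> desc c v)"
proof (induction rule: iw.induct)
  case (iw0 u) then show ?case by simp
next
  case (iwS u w k v)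
  have wn: "w \<noteq> par c" using iw_start[OF iwS.hyps(4)] by simp
  have "desc c u \<longleftrightarrow> desc c w"
    using iwS.hyps(3) unfolding adj_St
  proof
    assume h: "0 < w \<and> w < m \<and> par w = u"
    show ?thesis
    proof
      assume "desc c u" with h show "desc c w" using par_desc by blast
    next
      assume "desc c w"
      moreover have "w \<noteq> c" using h iwS.hyps(2) by auto
      ultimately show "desc c u" using desc_par h by blast
    qed
  next
    assume h: "0 < u \<and> u < m \<and> par u = w"
    show ?thesis
    proof
      assume "desc c w" with h show "desc c u" using par_desc by blast
    next
      assume "desc c u"
      moreover have "u \<noteq> c" using h wn by auto
      ultimately show "desc c w" using desc_par h by blast
    qed
  qed
  with iwS show ?case by simp
qed

lemma iw_out: "iw n (St m) {} k w v \<Longrightarrow> desc c w \<Longrightarrow> \<not> desc c v \<Longrightarrow> 0 < c \<Longrightarrow>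
   dep w + dep v \<le> k + 2 * dep (par c)"
proof (induction rule: iw.induct)
  case (iw0 u) then show ?case by simp
next
  case (iwS u w k v)
  show ?case
  proof (cases "desc c w")
    case True
    with iwS have "dep w + dep v \<le> k + 2 * dep (par c)" by simp
    with adj_dep[OF iwS.hyps(3)] show ?thesis by auto
  next
    case False
    from iwS.hyps(3) have "u = c \<and> w = par c" unfolding adj_St
    proof
      assume "0 < w \<and> w < m \<and> par w = u"
      with iwS.prems False par_desc show ?thesis by blast
    next
      assume h: "0 < u \<and> u < m \<and> par u = w"
      with iwS.prems False desc_par show ?thesis by blast
    qed
    moreover have "dep v \<le> dep w + k" using iw_dep[OF iwS.hyps(4)] by simp
    ultimately show ?thesis using dep_pos[OF iwS.prems(3)] by simp
  qed
qed

lemma adj_par: "0 < v \<Longrightarrow> v < n \<Longrightarrow> adj (St n) v (par v)"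
  unfolding adj_St by simp

lemma desc_iw: "(v + 1) div 2 ^ j = c + 1 \<Longrightarrow> v < n \<Longrightarrow> iw n (St n) {} j v c"
proof (induction j arbitrary: v)
  case 0 then show ?case by (auto intro: iw.iw0)
next
  case (Suc j)
  have "v > 0"
  proof (rule ccontr)
    assume "\<not> v > 0" then have "v = 0" by simp
    with Suc.prems show False by simp
  qed
  have "(v + 1) div 2 ^ Suc j = ((v+1) div 2) div 2 ^ j"
    by (simp add: div_mult2_eq mult.commute)
  with Suc.prems par_Suc[OF \<open>v>0\<close>] have "(par v + 1) div 2 ^ j = c + 1" by simp
  from Suc.IH[OF this] par_less[OF \<open>v>0\<close>] Suc.prems have "iw n (St n) {} j (par v) c" by simp
  then show ?case using adj_par[OF \<open>v>0\<close>] Suc.prems by (auto intro: iw.iwS)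
qed

lemma desc_iw2: "desc c v \<Longrightarrow> v < n \<Longrightarrow> iw n (St n) {} (dep v - dep c) v c"
  unfolding desc_def using desc_iw desc_dep by fastforce

lemma root_iw: "v < n \<Longrightarrow> iw n (St n) {} (dep v) v 0"
proof (induction v rule: less_induct)
  case (less v)
  show ?case
  proof (cases "v = 0")
    case True then show ?thesis using less by (auto intro: iw.iw0)
  next
    case False
    then have "iw n (St n) {} (dep (par v)) (par v) 0" using less par_less by simp
    then show ?thesis using adj_par[of v n] less False dep_pos by (auto intro: iw.iwS)
  qed
qed

lemma conn: "u < n \<Longrightarrow> v < n \<Longrightarrow> iw n (St n) {} (dep u + dep v) u v"
  using iw_trans[OF root_iw iw_rev[OF root_iw]] by blast

lemma gdist_ub: "u < n \<Longrightarrow> v < n \<Longrightarrow> gdist n (St n) u v \<le> dep u + dep v"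
  using gdist_le[OF conn] .

lemma gdist_iw: "u < n \<Longrightarrow> v < n \<Longrightarrow> iw n (St n) {} (gdist n (St n) u v) u v"
  using gdist_walk[OF conn] .

lemma gdist_dep: "u < n \<Longrightarrow> v < n \<Longrightarrow> dep v \<le> dep u + gdist n (St n) u v"
  using iw_dep[OF gdist_iw] by blast

lemma gdist_out: "w < n \<Longrightarrow> v < n \<Longrightarrow> desc c w \<Longrightarrow> \<not> desc c v \<Longrightarrow> 0 < c \<Longrightarrow>
   dep w + dep v \<le> gdist n (St n) w v + 2 * dep (par c)"
  using iw_out[OF gdist_iw] by blast

lemma dep_bound: "v + 1 < 2 ^ H \<Longrightarrow> dep v < H"
proof (induction v arbitrary: H rule: less_induct)
  case (less v)
  show ?case
  proof (cases "v = 0")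
    case True then show ?thesis using less.prems by (cases H) auto
  next
    case False
    then obtain H' where H: "H = Suc H'" using less.prems by (cases H) auto
    have "par v + 1 < 2 ^ H'" using par_Suc[of v] False less.prems H by auto
    from less.IH[OF par_less this] False show ?thesis by (simp add: dep_pos H)
  qed
qed

lemma dep_pow: "dep (2 ^ h - 1) = h"
proof (induction h)
  case 0 then show ?case by simp
next
  case (Suc h)
  have p: "0 < (2::nat) ^ h" by simp
  have q: "Suc 0 < 2 * (2::nat) ^ h" using one_le_power[of "2::nat" h] by linarith
  have "par (2 ^ Suc h - 1) = 2 ^ h - 1" unfolding par_def using p by simp
  moreover have "0 < (2::nat) ^ Suc h - 1" using q by simp
  ultimately show ?case using dep_pos Suc by simp
qed

lemma sib_bound:
  assumes X: "X < (2::nat) ^ H" and d: "X div 2 ^ j = 2*a+2"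
  shows "X + 2 ^ j < 2 ^ H"
proof -
  obtain P where P: "P = (2::nat)^j" by blast
  have p: "0 < P" using P by simp
  have dP: "X div P = 2*a+2" using d P by simp
  have lo0: "(2*a+2) * P \<le> X" using div_times_less_eq_dividend[of X P] unfolding dP .
  have lo: "P * (2*a+2) \<le> X" using lo0 by (simp only: mult.commute)
  have hi0: "X < P + (2*a+2) * P" using dividend_less_div_times[OF p, of X] unfolding dP .
  have hi: "X + P < P * (2*a+4)" using hi0 by (simp add: algebra_simps)
  have "P * 2 \<le> P * (2*a+2)" by (rule mult_left_mono) simp_all
  then have "2 * P < (2::nat)^H" using lo X by linarith
  moreover have "(2::nat)^(j+1) = 2 * P" using P by simp
  ultimately have "(2::nat)^(j+1) < 2^H" by simp
  then have "j + 1 < H" by (rule power_less_imp_less_exp[rotated]) simp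
  then obtain m where H: "H = j + 1 + m" by (metis less_imp_add_positive add.commute)
  obtain M where M: "M = (2::nat)^m" by blast
  have e: "(2::nat)^H = P * (2 * M)" by (simp add: H power_add P M)
  have "P * (2*a+2) < P * (2 * M)" using lo X e by linarith
  then have "2*a+2 < 2 * M" using mult_less_cancel1 by blast
  then have "2*a+4 \<le> 2 * M" by presburger
  then have "P * (2*a+4) \<le> P * (2 * M)" by (rule mult_left_mono) simp
  with hi e show ?thesis using P by linarith
qed

lemma sib_le:
  assumes n: "n = 2^H - 1"
  shows "card {v. v<n \<and> desc (2*a+1) v} \<le> card {v. v<n \<and> desc (2*a+2) v}"
proof -
  define f where "f v = v + 2 ^ (dep v - dep (2*a+1))" for v
  have key: "f v < n \<and> desc (2*a+2) (f v) \<and> dep (f v) = dep v" if v: "v < n" "desc (2*a+1) v" for v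
  proof -
    from v obtain j where j0: "(v + 1) div 2 ^ j = 2*a+1+1" unfolding desc_def by blast
    have j: "(v + 1) div 2 ^ j = 2*a+2" using j0 by simp
    have dv: "dep v = dep (2*a+1) + j" using desc_dep[OF j0] .
    then have fv: "f v = v + 2^j" unfolding f_def by simp
    have X: "v + 1 < 2^H" using v n by simp
    have "v + 1 + 2^j < 2^H" using sib_bound[OF X j] .
    then have 1: "f v < n" using fv n by simp
    obtain P where P: "P = (2::nat)^j" by blast
    have p: "0 < P" using P by simp
    have "(v + 1 + P) div P = (v+1) div P + 1" using p by (intro div_add_self2) simp
    then have "(f v + 1) div P = 2*a+2+1" using j fv P by (simp add: algebra_simps)
    then have e: "(f v + 1) div 2^j = 2*a+2+1" using P by simp
    then have 2: "desc (2*a+2) (f v)" unfolding desc_def by blast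
    have "dep (f v) = dep (2*a+2) + j" using desc_dep[OF e] .
    then have 3: "dep (f v) = dep v" using dv dep_c12 by simp
    from 1 2 3 show ?thesis by blast
  qed
  have "inj_on f {v. v<n \<and> desc (2*a+1) v}"
  proof (rule inj_onI)
    fix x y assume x: "x \<in> {v. v<n \<and> desc (2*a+1) v}" and y: "y \<in> {v. v<n \<and> desc (2*a+1) v}"
      and e: "f x = f y"
    then have "dep x = dep y" using key by (metis mem_Collect_eq)
    with e show "x = y" unfolding f_def by simp
  qed
  moreover have "f ` {v. v<n \<and> desc (2*a+1) v} \<subseteq> {v. v<n \<and> desc (2*a+2) v}" using key by auto
  ultimately show ?thesis by (intro card_inj_on_le) auto
qed

lemma sib_pow_le: "((v::nat) + 1) div 2 ^ j = 2*a+2+1 \<Longrightarrow> 2^j \<le> v"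
proof -
  assume j: "(v + 1) div 2 ^ j = 2*a+2+1"
  obtain P where P: "P = (2::nat)^j" by blast
  have jj: "(v+1) div P = 2*a+3" using j P by simp
  have "(v+1) div P * P \<le> v + 1" by (rule div_times_less_eq_dividend)
  then have "(2*a+3) * P \<le> v + 1" unfolding jj .
  moreover have "3 * P \<le> (2*a+3) * P" by (rule mult_right_mono) simp_all
  moreover have "0 < P" using P by simp
  ultimately show ?thesis using P by linarith
qed

lemma sib_ge:
  shows "card {v. v<n \<and> desc (2*a+2) v} \<le> card {v. v<n \<and> desc (2*a+1) v}"
proof -
  define f where "f v = v - 2 ^ (dep v - dep (2*a+2))" for v
  have fj: "f v = v - 2^j \<and> 2^j \<le> v" if j: "(v + 1) div 2 ^ j = 2*a+2+1" for v j
  proof -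
    have dv: "dep v = dep (2*a+2) + j" using desc_dep[OF j] .
    then show ?thesis unfolding f_def using sib_pow_le[OF j] by simp
  qed
  have key: "f v < n \<and> desc (2*a+1) (f v) \<and> dep (f v) = dep v" if v: "v < n" "desc (2*a+2) v" for v
  proof -
    from v obtain j where j0: "(v + 1) div 2 ^ j = 2*a+2+1" unfolding desc_def by blast
    have dv: "dep v = dep (2*a+2) + j" using desc_dep[OF j0] .
    have fv: "f v = v - 2^j" and ge: "2^j \<le> v" using fj[OF j0] by auto
    have 1: "f v < n" using fv v by simp
    obtain P where P: "P = (2::nat)^j" by blast
    have p: "0 < P" using P by simp
    have "(f v + 1 + P) div P = (f v + 1) div P + 1" using p by (intro div_add_self2) simp
    moreover have "f v + 1 + P = v + 1" using fv ge P by simp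
    ultimately have "(f v + 1) div P = 2*a+1+1" using j0 P by simp
    then have e: "(f v + 1) div 2^j = 2*a+1+1" using P by simp
    then have 2: "desc (2*a+1) (f v)" unfolding desc_def by blast
    have "dep (f v) = dep (2*a+1) + j" using desc_dep[OF e] .
    then have 3: "dep (f v) = dep v" using dv dep_c12 by simp
    from 1 2 3 show ?thesis by blast
  qed
  have "inj_on f {v. v<n \<and> desc (2*a+2) v}"
  proof (rule inj_onI)
    fix x y assume x: "x \<in> {v. v<n \<and> desc (2*a+2) v}" and y: "y \<in> {v. v<n \<and> desc (2*a+2) v}"
      and e: "f x = f y"
    then have d: "dep x = dep y" using key by (metis mem_Collect_eq)
    from x obtain j where j: "(x + 1) div 2 ^ j = 2*a+2+1" unfolding desc_def by blast
    from y obtain k where k: "(y + 1) div 2 ^ k = 2*a+2+1" unfolding desc_def by blast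
    have "j = k" using desc_dep[OF j] desc_dep[OF k] d by simp
    have fx: "f x = x - 2^k" "2^k \<le> x" using fj[OF j] \<open>j = k\<close> by auto
    have fy: "f y = y - 2^k" "2^k \<le> y" using fj[OF k] by auto
    show "x = y" using e fx fy by linarith
  qed
  moreover have "f ` {v. v<n \<and> desc (2*a+2) v} \<subseteq> {v. v<n \<and> desc (2*a+1) v}" using key by auto
  ultimately show ?thesis by (intro card_inj_on_le) auto
qed

lemma sib_eq: "n = 2^H - 1 \<Longrightarrow> card {v. v<n \<and> desc (2*a+1) v} = card {v. v<n \<and> desc (2*a+2) v}"
  using sib_le sib_ge le_antisym by blast

lemma median:
  assumes n: "n = 2^H - 1" and a: "a < n" and t: "t < n" "desc a t"
  shows "(\<Sum>v\<in>{v. v<n \<and> desc a v}. dep v - dep a) \<le> (\<Sum>v\<in>{v. v<n \<and> desc a v}. gdist n (St n) t v)"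
proof (cases "t = a")
  case True
  show ?thesis
  proof (rule sum_mono)
    fix v assume "v \<in> {v. v<n \<and> desc a v}"
    then have "dep v \<le> dep a + gdist n (St n) a v" using gdist_dep a by blast
    then show "dep v - dep a \<le> gdist n (St n) t v" using True by simp
  qed
next
  case False
  define D where "D = {v. v<n \<and> desc a v}"
  obtain e e' where ee: "(e = 2*a+1 \<and> e' = 2*a+2) \<or> (e = 2*a+2 \<and> e' = 2*a+1)" and te: "desc e t"
    using desc_split[OF t(2) False] by blast
  define E where "E = {v. v<n \<and> desc e v}"
  define E' where "E' = {v. v<n \<and> desc e' v}"
  have pe: "par e = a" "par e' = a" "0 < e" "0 < e'" using ee by (auto simp: par_def)
  have de: "dep e = Suc (dep a)" using ee dep_c12 by auto
  have cE: "card E = card E'" unfolding E_def E'_def using ee sib_eq[OF n, of a] by auto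
  have disj: "desc e v \<Longrightarrow> \<not> desc e' v" for v using ee desc_disj by blast
  have fD: "finite D" unfolding D_def by simp
  have ED: "E \<subseteq> D" unfolding E_def D_def using desc_up[of e] pe by auto
  have E'D: "E' \<subseteq> D - E" unfolding E'_def E_def D_def using desc_up[of e'] pe disj by auto
  have cle: "card E \<le> card (D - E)" using cE card_mono[OF _ E'D] fD by simp
  define k where "k = dep t - dep a"
  have dt: "dep e \<le> dep t" using desc_dep_le[OF te] .
  define g where "g v = gdist n (St n) t v" for v
  have 1: "(\<Sum>v\<in>E. dep v - dep a) \<le> (\<Sum>v\<in>E. g v) + k * card E"
  proof -
    have "(\<Sum>v\<in>E. dep v - dep a) \<le> (\<Sum>v\<in>E. g v + k)"
    proof (rule sum_mono)
      fix v assume "v \<in> E"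
      then have "dep v \<le> dep t + g v" using gdist_dep t unfolding E_def g_def by blast
      then show "dep v - dep a \<le> g v + k" unfolding k_def using dt de by linarith
    qed
    also have "\<dots> = (\<Sum>v\<in>E. g v) + k * card E" by (simp add: sum.distrib mult.commute)
    finally show ?thesis .
  qed
  have 2: "(\<Sum>v\<in>D - E. dep v - dep a) + k * card (D - E) \<le> (\<Sum>v\<in>D - E. g v)"
  proof -
    have "(\<Sum>v\<in>D - E. dep v - dep a) + k * card (D - E) = (\<Sum>v\<in>D - E. dep v - dep a + k)"
      by (simp add: sum.distrib mult.commute)
    also have "\<dots> \<le> (\<Sum>v\<in>D - E. g v)"
    proof (rule sum_mono)
      fix v assume v: "v \<in> D - E"
      then have v1: "v < n" "desc a v" "\<not> desc e v" unfolding D_def E_def by auto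
      have "dep t + dep v \<le> g v + 2 * dep a"
        using gdist_out[OF t(1) v1(1) te v1(3) pe(3)] pe(1) unfolding g_def by simp
      moreover have "dep a \<le> dep v" using desc_dep_le[OF v1(2)] .
      ultimately show "dep v - dep a + k \<le> g v" unfolding k_def using pe dt de by linarith
    qed
    finally show ?thesis .
  qed
  have s1: "(\<Sum>v\<in>D. dep v - dep a) = (\<Sum>v\<in>D - E. dep v - dep a) + (\<Sum>v\<in>E. dep v - dep a)"
    using sum.subset_diff[OF ED fD] .
  have s2: "(\<Sum>v\<in>D. g v) = (\<Sum>v\<in>D - E. g v) + (\<Sum>v\<in>E. g v)"
    using sum.subset_diff[OF ED fD] .
  have "k * card E \<le> k * card (D - E)" using cle by simp
  then have "(\<Sum>v\<in>D. dep v - dep a) \<le> (\<Sum>v\<in>D. g v)" using 1 2 s1 s2 by linarith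
  then show ?thesis unfolding D_def g_def .
qed

lemma dep_le_h: "n = 2^(Suc h) - 1 \<Longrightarrow> v < n \<Longrightarrow> dep v \<le> h"
proof -
  assume n: "n = 2^(Suc h) - 1" and v: "v < n"
  have "v + 1 < 2^(Suc h)" using n v by linarith
  from dep_bound[OF this] show ?thesis by simp
qed

lemma gdist_le_h: "n = 2^(Suc h) - 1 \<Longrightarrow> u < n \<Longrightarrow> v < n \<Longrightarrow> gdist n (St n) u v \<le> 2 * h"
  using gdist_ub[of u n v] dep_le_h[of n h u] dep_le_h[of n h v] by linarith

lemma h_le_n: "n = 2^(Suc h) - 1 \<Longrightarrow> 2 * h + 1 \<le> n"
proof -
  assume n: "n = 2^(Suc h) - 1"
  obtain P where P: "P = (2::nat)^h" by blast
  have "h < P" using less_exp P by simp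
  moreover have "n = 2 * P - 1" using n P by simp
  ultimately show ?thesis by linarith
qed

lemma n_sq: "n = 2^(Suc h) - 1 \<Longrightarrow> 2 * h + 1 \<le> n^2"
proof -
  assume n: "n = 2^(Suc h) - 1"
  then have "2*h+1 \<le> n" by (rule h_le_n)
  moreover have "n \<le> n^2" by (simp add: power2_eq_square)
  ultimately show ?thesis by linarith
qed

lemma cost_le: assumes n: "n = 2^(Suc h) - 1" and i: "i < n"
  shows "sum_cost n (St n) i \<le> n^2"
proof -
  have "sum_cost n (St n) i \<le> (\<Sum>v<n. 2 * h)" unfolding sum_cost_def
    by (rule sum_mono) (use gdist_le_h[OF n i] in auto)
  also have "\<dots> = n * (2 * h)" by simp
  also have "\<dots> \<le> n * n" using h_le_n[OF n] by simp
  finally show ?thesis by (simp add: power2_eq_square)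
qed

lemma St_leaf: "n \<le> 2*i+1 \<Longrightarrow> St n i = {}"
  unfolding St_def par_def by auto

lemma St_int: assumes n: "n = 2^H - 1" and i: "2*i+1 < n"
  shows "St n i = {2*i+1, 2*i+2} \<and> 2*i+2 < n"
proof -
  have "H \<noteq> 0" using n i by (cases H) auto
  then obtain H' where H: "H = Suc H'" by (cases H) auto
  obtain M where M: "M = (2::nat)^H'" by blast
  have "n = 2 * M - 1" using n H M by simp
  then have lt: "2*i+2 < n" using i by presburger
  have "St n i = {2*i+1, 2*i+2}" unfolding St_def par_def using lt by auto
  with lt show ?thesis by simp
qed

lemma split3:
  assumes "D1 \<subseteq> U" "D2 \<subseteq> U" "D1 \<inter> D2 = {}" "finite U"
  shows "sum f U = sum f (U - D1 - D2) + sum f D1 + sum f D2"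
proof -
  have "sum f U = sum f (U - D1) + sum f D1" using sum.subset_diff[OF assms(1,4)] .
  moreover have "D2 \<subseteq> U - D1" using assms by auto
  then have "sum f (U - D1) = sum f (U - D1 - D2) + sum f D2"
    using sum.subset_diff[of D2 "U - D1"] assms(4) by simp
  ultimately show ?thesis by (simp add: add_ac)
qed

lemma part:
  assumes n: "n = 2^H - 1" and c: "0 < c" "c < n" "par c = i" and t: "t < n" "desc c t"
    and lb: "\<And>v. v < n \<Longrightarrow> desc c v \<Longrightarrow> Suc (gdist n (St n) t v) \<le> gdist n S' i v"
  shows "(\<Sum>v\<in>{v. v<n \<and> desc c v}. gdist n (St n) i v) \<le> (\<Sum>v\<in>{v. v<n \<and> desc c v}. gdist n S' i v)"
proof -
  define D where "D = {v. v<n \<and> desc c v}"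
  have fD: "finite D" unfolding D_def by simp
  have ub: "gdist n (St n) i v \<le> Suc (dep v - dep c)" if v: "v \<in> D" for v
  proof -
    have "iw n (St n) {} (dep v - dep c) v c" using desc_iw2 v unfolding D_def by blast
    moreover have "adj (St n) c i" using adj_par[OF c(1,2)] c(3) by simp
    moreover have "i < n" using c par_less by (metis less_trans)
    ultimately have "iw n (St n) {} (Suc (dep v - dep c)) v i" by (rule iw_snoc)
    then show ?thesis using gdist_le[OF iw_rev] by blast
  qed
  have "(\<Sum>v\<in>D. gdist n (St n) i v) \<le> (\<Sum>v\<in>D. Suc (dep v - dep c))" by (rule sum_mono) (rule ub)
  also have "\<dots> = card D + (\<Sum>v\<in>D. dep v - dep c)" unfolding Suc_eq_plus1 sum.distrib by simp
  also have "\<dots> \<le> card D + (\<Sum>v\<in>D. gdist n (St n) t v)"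
    using median[OF n c(2) t] unfolding D_def by simp
  also have "\<dots> = (\<Sum>v\<in>D. Suc (gdist n (St n) t v))" unfolding Suc_eq_plus1 sum.distrib by simp
  also have "\<dots> \<le> (\<Sum>v\<in>D. gdist n S' i v)" by (rule sum_mono) (use lb in \<open>auto simp: D_def\<close>)
  finally show ?thesis unfolding D_def .
qed

lemma eq_i:
  assumes n: "n = 2^(Suc h) - 1" and i: "i < n"
    and T: "is_strategy n (\<lambda>v. card (St n v)) i T"
  shows "sum_cost n (St n) i \<le> sum_cost n ((St n)(i := T)) i"
proof (cases "2*i+1 < n")
  case False
  then have e: "St n i = {}" by (intro St_leaf) simp
  have "finite T" using T unfolding is_strategy_def by (meson finite_Diff finite_lessThan finite_subset)
  with T e have "T = {}" unfolding is_strategy_def by simp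
  then have "(St n)(i := T) = St n" using e by (metis fun_upd_triv)
  then show ?thesis by simp
next
  case True
  define S where "S = St n"
  define S' where "S' = S(i := T)"
  define c1 where "c1 = 2*i+1"
  define c2 where "c2 = 2*i+2"
  have Si: "S i = {c1, c2}" and c2n: "c2 < n" using St_int[OF n True] unfolding S_def c1_def c2_def by auto
  have c1n: "c1 < n" using True c1_def by simp
  have pc: "par c1 = i" "par c2 = i" "0 < c1" "0 < c2" "i < c1" "i < c2" unfolding c1_def c2_def by (auto simp: par_def)
  have fT: "finite T" using T unfolding is_strategy_def by (meson finite_Diff finite_lessThan finite_subset)
  have cT: "card T = 2" using T Si pc unfolding is_strategy_def S_def by (simp add: c1_def c2_def)
  have Tsub: "T \<subseteq> {..<n} - {i}" using T unfolding is_strategy_def by simp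
  have S'o: "\<And>j. j \<noteq> i \<Longrightarrow> S' j = S j" unfolding S'_def by simp
  have adjI: "x \<in> T \<or> (0 < i \<and> par i = x)" if "adj S' i x" for x
  proof -
    from that have "x \<in> T \<or> i \<in> S' x" unfolding adj_def S'_def by simp
    moreover have "i \<in> S' x \<Longrightarrow> x \<in> T \<or> (0 < i \<and> par i = x)"
      using Tsub unfolding S'_def S_def St_def by (cases "x = i") auto
    ultimately show ?thesis by blast
  qed
  have W: "\<exists>x\<in>T. \<exists>k'. desc c x \<and> iw n S {} k' x v \<and> k' < k"
    if c: "c = c1 \<or> c = c2" and v: "v < n" "desc c v" and w: "iw n S' {} k i v" for c v k
  proof -
    have pcc: "par c = i" "0 < c" "i < c" using c pc by auto
    have "v \<noteq> i" using desc_ge[OF v(2)] pcc by simp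
    from iw_last[OF w this] obtain x k' where xk: "k' < k" "adj S' i x" "iw n S' {i} k' x v" by blast
    have w2: "iw n S {i} k' x v" using iw_change[OF xk(3) S'o] by simp
    have "desc c x" using iw_cross[OF w2[unfolded S_def pcc(1)[symmetric]] pcc(2)] v(2) by simp
    moreover have "\<not> desc c (par i)"
    proof
      assume "desc c (par i)"
      then have "c \<le> par i" by (rule desc_ge)
      moreover have "par i \<le> i" unfolding par_def by simp
      ultimately show False using pcc(3) by simp
    qed
    ultimately have "x \<in> T" using adjI[OF xk(2)] by blast
    moreover have "iw n S {} k' x v" using iw_mono[OF w2] by simp
    ultimately show ?thesis using xk(1) \<open>desc c x\<close> by blast
  qed
  show ?thesis
  proof (cases "(\<exists>x\<in>T. desc c1 x) \<and> (\<exists>x\<in>T. desc c2 x)")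
    case False
    then obtain c where c: "c = c1 \<or> c = c2" and nT: "\<forall>x\<in>T. \<not> desc c x" by blast
    have cn: "c < n" using c c1n c2n by auto
    have "\<not> (\<exists>k. walk n S' k i c)"
    proof
      assume "\<exists>k. walk n S' k i c"
      then obtain k where "iw n S' {} k i c" using walk_iw by blast
      from W[OF c cn desc_refl this] nT show False by blast
    qed
    then have g: "gdist n S' i c = n^2" unfolding gdist_def by simp
    have "sum_cost n S i \<le> n^2" unfolding S_def using cost_le[OF n i] .
    also have "\<dots> \<le> sum_cost n S' i" unfolding sum_cost_def g[symmetric]
      by (rule member_le_sum) (use cn in auto)
    finally show ?thesis unfolding S_def S'_def .
  next
    case True
    then obtain t1 t2 where t1: "t1 \<in> T" "desc c1 t1" and t2: "t2 \<in> T" "desc c2 t2" by blast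
    have disj: "\<And>v. desc c1 v \<Longrightarrow> \<not> desc c2 v" unfolding c1_def c2_def using desc_disj by blast
    have "t1 \<noteq> t2" using disj t1 t2 by blast
    then have "card {t1, t2} = 2" by simp
    then have Teq: "T = {t1, t2}" using card_subset_eq[OF fT, of "{t1,t2}"] t1 t2 cT by simp
    have t1n: "t1 < n" and t2n: "t2 < n" using Tsub t1 t2 by auto
    have LB: "Suc (gdist n S t v) \<le> gdist n S' i v"
      if c: "(c = c1 \<and> t = t1) \<or> (c = c2 \<and> t = t2)" and v: "v < n" "desc c v" for c t v
    proof (rule gdist_ge)
      have tn: "t < n" using c t1n t2n by auto
      show "Suc (gdist n S t v) \<le> n^2" using gdist_le_h[OF n tn v(1)] n_sq[OF n] unfolding S_def by linarith
      fix k assume w: "iw n S' {} k i v"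
      have cc: "c = c1 \<or> c = c2" using c by auto
      from W[OF cc v w] obtain x k' where x: "x \<in> T" "desc c x" "iw n S {} k' x v" "k' < k" by blast
      have "x = t" using x(1,2) Teq c disj t1 t2 by auto
      have "gdist n S t v \<le> k'" using gdist_le[OF x(3)] \<open>x = t\<close> by simp
      then show "Suc (gdist n S t v) \<le> k" using x(4) by simp
    qed
    have LR: "gdist n S i v \<le> gdist n S' i v" if v: "v < n" "\<not> desc c1 v" "\<not> desc c2 v" for v
    proof (cases "v = i")
      case True then show ?thesis using gdist_self[OF i] by simp
    next
      case vi: False
      show ?thesis
      proof (rule gdist_ge)
        show "gdist n S i v \<le> n^2" using gdist_le_h[OF n i v(1)] n_sq[OF n] unfolding S_def by linarith
        fix k assume w: "iw n S' {} k i v"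
        from iw_last[OF w vi] obtain x k' where xk: "k' < k" "adj S' i x" "iw n S' {i} k' x v" by blast
        have w2: "iw n S {i} k' x v" using iw_change[OF xk(3) S'o] by simp
        show "gdist n S i v \<le> k"
        proof (cases "x \<in> T")
          case True
          then have "desc c1 x \<or> desc c2 x" using Teq t1 t2 by auto
          moreover have "desc c1 x \<longleftrightarrow> desc c1 v"
            using iw_cross[OF w2[unfolded S_def pc(1)[symmetric]] pc(3)] .
          moreover have "desc c2 x \<longleftrightarrow> desc c2 v"
            using iw_cross[OF w2[unfolded S_def pc(2)[symmetric]] pc(4)] .
          ultimately show ?thesis using v by blast
        next
          case False
          then have ip: "0 < i" "par i = x" using adjI[OF xk(2)] by auto
          have "iw n S {} k' x v" using iw_mono[OF w2] by simp
          then have "iw n S {} (Suc k') i v" using adj_par[OF ip(1) i] ip(2) i unfolding S_def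
            by (auto intro: iw.iwS)
          then have "gdist n S i v \<le> Suc k'" by (rule gdist_le)
          then show ?thesis using xk(1) by simp
        qed
      qed
    qed
    define U where "U = {..<n}"
    define D1 where "D1 = {v. v<n \<and> desc c1 v}"
    define D2 where "D2 = {v. v<n \<and> desc c2 v}"
    have sp: "sum f U = sum f (U - D1 - D2) + sum f D1 + sum f D2" for f :: "nat \<Rightarrow> nat"
      by (rule split3) (auto simp: U_def D1_def D2_def dest: disj)
    have r: "(\<Sum>v\<in>U - D1 - D2. gdist n S i v) \<le> (\<Sum>v\<in>U - D1 - D2. gdist n S' i v)"
      by (rule sum_mono) (use LR in \<open>auto simp: U_def D1_def D2_def\<close>)
    have d1: "(\<Sum>v\<in>D1. gdist n S i v) \<le> (\<Sum>v\<in>D1. gdist n S' i v)"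
      unfolding D1_def S_def
      by (rule part[of n "Suc h" c1 i t1 S']) (use n pc c1n t1n t1 LB in \<open>auto simp: S_def\<close>)
    have d2: "(\<Sum>v\<in>D2. gdist n S i v) \<le> (\<Sum>v\<in>D2. gdist n S' i v)"
      unfolding D2_def S_def
      by (rule part[of n "Suc h" c2 i t2 S']) (use n pc c2n t2n t2 LB in \<open>auto simp: S_def\<close>)
    have "sum_cost n S i \<le> sum_cost n S' i"
      unfolding sum_cost_def U_def[symmetric] using sp[of "gdist n S i"] sp[of "gdist n S' i"] r d1 d2
      by linarith
    then show ?thesis unfolding S_def S'_def .
  qed
qed

lemma St_sub: "St n i \<subseteq> {..<n} - {i}"
proof
  fix x assume "x \<in> St n i"
  then have x: "0 < x" "x < n" "par x = i" by (auto simp: St_def)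
  then have "i < x" using par_less by blast
  with x show "x \<in> {..<n} - {i}" by simp
qed

lemma budget_sum: "(\<Sum>i<n. card (St n i)) = n - 1"
proof -
  have fin: "\<forall>i\<in>{..<n}. finite (St n i)" unfolding St_def by simp
  have dis: "\<forall>i\<in>{..<n}. \<forall>j\<in>{..<n}. i \<noteq> j \<longrightarrow> St n i \<inter> St n j = {}"
    unfolding St_def by blast
  have "card (\<Union>i\<in>{..<n}. St n i) = (\<Sum>i<n. card (St n i))"
    using card_UN_disjoint[OF finite_lessThan fin dis] .
  moreover have "(\<Union>i\<in>{..<n}. St n i) = {0<..<n}"
  proof
    show "(\<Union>i\<in>{..<n}. St n i) \<subseteq> {0<..<n}" unfolding St_def by auto
  next
    show "{0<..<n} \<subseteq> (\<Union>i\<in>{..<n}. St n i)"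
    proof
      fix x assume x: "x \<in> {0<..<n}"
      then have "par x < n" using par_less[of x] by simp
      moreover have "x \<in> St n (par x)" using x unfolding St_def by simp
      ultimately show "x \<in> (\<Union>i\<in>{..<n}. St n i)" by blast
    qed
  qed
  ultimately show ?thesis by simp
qed

lemma good_n:
  assumes h: "1 \<le> h" and n: "n = 2^(Suc h) - 1"
  shows "\<exists>b :: nat \<Rightarrow> nat. (\<forall>i<n. b i \<le> n - 1) \<and> (\<Sum>i<n. b i) = n - 1 \<and>
       (\<exists>S. sum_equilibrium n b S \<and>
          (1/2) * log 2 (real n) \<le> real (diameter n S) \<and>
          real (diameter n S) \<le> 2 * log 2 (real n))"
proof (intro exI conjI allI impI)
  define b where "b v = card (St n v)" for v
  show "b i \<le> n - 1" if "i < n" for i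
    unfolding b_def using card_mono[OF _ St_sub[of n i]] that by simp
  show "(\<Sum>i<n. b i) = n - 1" unfolding b_def by (rule budget_sum)
  show "sum_equilibrium n b (St n)" unfolding sum_equilibrium_def is_profile_def
  proof (intro conjI allI impI)
    fix i assume "i < n"
    show "is_strategy n b i (St n i)" unfolding is_strategy_def b_def using St_sub by simp
  next
    fix i T assume "i < n" "is_strategy n b i T"
    then show "sum_cost n (St n) i \<le> sum_cost n ((St n)(i := T)) i"
      using eq_i[OF n] unfolding b_def by blast
  qed
  define G where "G = {gdist n (St n) u v | u v. u < n \<and> v < n}"
  have P: "(2::nat)^h \<le> n" using n by simp
  have n0: "0 < n" using P one_le_power[of "2::nat" h] by linarith
  have Gsub: "G \<subseteq> {..2*h}" unfolding G_def using gdist_le_h[OF n] by auto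
  then have fG: "finite G" using finite_subset by blast
  have vn: "2^h - 1 < n" using P n0 by linarith
  have gG: "gdist n (St n) 0 (2^h - 1) \<in> G" unfolding G_def using vn n0 by blast
  have lo: "h \<le> diameter n (St n)"
  proof -
    have "dep (2^h - 1) \<le> dep 0 + gdist n (St n) 0 (2^h - 1)" using gdist_dep[OF n0 vn] .
    then have "h \<le> gdist n (St n) 0 (2^h - 1)" using dep_pow by simp
    also have "\<dots> \<le> Max G" using Max_ge[OF fG gG] .
    finally show ?thesis unfolding diameter_def G_def .
  qed
  have hi: "diameter n (St n) \<le> 2*h"
    unfolding diameter_def G_def[symmetric] by (rule Max.boundedI) (use fG gG Gsub in auto)
  have l1: "log 2 (real n) \<le> real (Suc h)"
    by (rule log2_of_power_le) (use n n0 in auto)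
  have l2: "real h \<le> log 2 (real n)"
    by (rule le_log2_of_power) (rule P)
  show "(1/2) * log 2 (real n) \<le> real (diameter n (St n))"
  proof -
    have "real h \<le> real (diameter n (St n))" using lo by simp
    moreover have "(1::real) \<le> real h" using h by simp
    ultimately show ?thesis using l1 by simp
  qed
  show "real (diameter n (St n)) \<le> 2 * log 2 (real n)"
  proof -
    have "real (diameter n (St n)) \<le> 2 * real h" using hi by simp
    then show ?thesis using l2 by simp
  qed
qed

theorem mainTheorem5:
  shows "\<exists>c1 c2 :: real. c1 > 0 \<and> c2 > 0 \<and>
    infinite {n::nat. \<exists>b :: nat \<Rightarrow> nat. (\<forall>i<n. b i \<le> n - 1) \<and> (\<Sum>i<n. b i) = n - 1 \<and>
       (\<exists>S. sum_equilibrium n b S \<and>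
          c1 * log 2 (real n) \<le> real (diameter n S) \<and>
          real (diameter n S) \<le> c2 * log 2 (real n))}"
proof (intro exI conjI)
  show "(0::real) < 1/2" by simp
  show "(0::real) < 2" by simp
  show "infinite {n::nat. \<exists>b :: nat \<Rightarrow> nat. (\<forall>i<n. b i \<le> n - 1) \<and> (\<Sum>i<n. b i) = n - 1 \<and>
       (\<exists>S. sum_equilibrium n b S \<and>
          (1/2) * log 2 (real n) \<le> real (diameter n S) \<and>
          real (diameter n S) \<le> 2 * log 2 (real n))}"
    unfolding infinite_nat_iff_unbounded_le
  proof
    fix m
    have "m < 2^m" by (rule less_exp)
    moreover have "(2::nat)^m \<le> 2^(Suc (Suc m)) - 1" by simp
    ultimately have "m \<le> 2^(Suc (Suc m)) - 1" by linarith
    moreover have "1 \<le> Suc m" by simp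
    ultimately show "\<exists>n\<ge>m. n \<in> {n::nat. \<exists>b :: nat \<Rightarrow> nat. (\<forall>i<n. b i \<le> n - 1) \<and> (\<Sum>i<n. b i) = n - 1 \<and>
       (\<exists>S. sum_equilibrium n b S \<and>
          (1/2) * log 2 (real n) \<le> real (diameter n S) \<and>
          real (diameter n S) \<le> 2 * log 2 (real n))}"
      using good_n[of "Suc m" "2^(Suc (Suc m)) - 1"] by blast
  qed
qed

end
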